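(* Let $f(\pi)=\pi f_1(0,\pi)+(1-\pi)f_0(0,\pi)$ be a $k$-equilibrium continuous-time dynamics with stable equilibria $\pi^{\mathfrak e}_1\le\dots\le\pi^{\mathfrak e}_k$ and basins $I_1,\dots,I_k$. Work in continuous time, with group $A$ initially advantaged, $\pi_0(1|B)\in I_i$, $\pi_0(1|A)\in I_j$ (so $i\le j$). Under the unconstrained policy UN, $(\pi_t(1|A),\pi_t(1|B))\to(\pi^{\mathfrak e}_j,\pi^{\mathfrak e}_i)$ and $U_t(UN)\to u(1)\big(g_A\pi^{\mathfrak e}_j+(1-g_A)\pi^{\mathfrak e}_i\big)$. Moreover: (i) If the AA1 policy is applied at all times and $L_{AA1}:=\max_{\pi\in[0,1]}|f_1(0,\pi)-f_0(0,\pi)|<1$, then both profiles converge to $\pi^{\mathfrak e}_i$ and $\lim_tU_t(AA1)=u(1)\pi^{\mathfrak e}_i\le\lim_tU_t(UN)$. (ii) If $f_1,f_0$ are $\ell_1$-Lipschitz with constants $L_1,L_0$, the AA2 policy is applied at all times, and $L_{AA2}:=\max_{0\le\Delta\le\pi\le1}\big(2[\pi L_1+(1-\pi)L_0]+|f_1(\Delta,\pi-\Delta)-f_0(\Delta,\pi-\Delta)|\big)<1$, then both profiles converge to $\pi^{\mathfrak e}_j$ and $\lim_tU_t(AA2)=u(1)\pi^{\mathfrak e}_j\ge\lim_tU_t(UN)$. Here $U_t(P)$ is the institutional utility of policy $P$ evaluated on the profiles at time $t$ of the trajectory generated by $P$ from the given initial profiles.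
   Context: Two groups $A,B$ with fractions $g_A\in[0,1]$, $g_B=1-g_A$; $\neg j$ is the other group. Group $j$ has profile $\pi_t(1|j)\in[0,1]$, $\pi_t(0|j)=1-\pi_t(1|j)$. Policy $\tau(v;j)\in[0,1]$; utilities $u(0)\le0\le u(1)$; $U_t(\tau)=\sum_jg_j\sum_vu(v)\tau(v;j)\pi_t(v|j)$. Selection rates $\beta_t(v;j)=\tau(v;j)\pi_t(v|j)$. Dynamics: continuously differentiable $f_0,f_1:[0,1]^2\to[0,1]$; continuous time $\frac{d}{dt}\pi_t(1|j)=\pi_t(1|j)(f_1(\beta_t(0;j),\beta_t(1;j))-1)+(1-\pi_t(1|j))f_0(\beta_t(0;j),\beta_t(1;j))$, policy determined by current profiles. UN: $\tau(1;j)=1,\tau(0;j)=0$, so each group follows $\dot\pi=f(\pi)-\pi$. Definition: $f$ is a $k$-equilibrium CT dynamics if it is continuously differentiable with fixed points $\pi^{\mathfrak e}_1\le\dots\le\pi^{\mathfrak e}_k$ and fixed points $\delta_i\in(\pi^{\mathfrak e}_i,\pi^{\mathfrak e}_{i+1})$, $i=1,\dots,k-1$, such that with basins $I_1=[0,\delta_1)$, $I_i=(\delta_{i-1},\delta_i)$ for $1<i<k$, $I_k=(\delta_{k-1},1]$ ($I_1=[0,1]$ if $k=1$), every solution of $\dot\pi=f(\pi)-\pi$ started in $I_i$ converges to $\pi^{\mathfrak e}_i$. Group $j$ is advantaged at $t$ if $\pi_t(1|j)\ge\pi_t(1|\neg j)$. AA1 w.r.t. advantaged $j$: $\tau(1;j)=\pi_t(1|\neg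 j)/\pi_t(1|j)$, $\tau(0;j)=0$, $\tau(1;\neg j)=1$, $\tau(0;\neg j)=0$. AA2 w.r.t. advantaged $j$: $\tau(1;j)=\tau(1;\neg j)=1$, $\tau(0;j)=0$, $\tau(0;\neg j)=(\pi_t(1|j)-\pi_t(1|\neg j))/(1-\pi_t(1|\neg j))$. "Applied at all times": w.r.t. the currently advantaged group. "$\ell_1$-Lipschitz with constant $L_i$": $|f_i(x_1,x_2)-f_i(y_1,y_2)|\le L_i(|x_1-y_1|+|x_2-y_2|)$. *)

theory Defs
  imports "HOL-Analysis.Analysis"
begin

datatype grp = GA | GB

fun other :: "grp \<Rightarrow> grp" where
  "other GA = GB" | "other GB = GA"

definition gfrac :: "real \<Rightarrow> grp \<Rightarrow> real" where
  "gfrac gA j = (if j = GA then gA else 1 - gA)"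

(* A profile is  p :: grp => real,  p j = pi(1|j);  pi(0|j) = 1 - p j.
   Outcomes v in {0,1} are encoded as bool (True = 1, False = 0). *)
definition piv :: "(grp \<Rightarrow> real) \<Rightarrow> bool \<Rightarrow> grp \<Rightarrow> real" where
  "piv p v j = (if v then p j else 1 - p j)"

definition utility :: "real \<Rightarrow> real \<Rightarrow> real \<Rightarrow> (bool \<Rightarrow> grp \<Rightarrow> real) \<Rightarrow> (grp \<Rightarrow> real) \<Rightarrow> real" where
  "utility u0 u1 gA tau p =
     (\<Sum>j\<in>{GA, GB}. gfrac gA j *
        (u1 * tau True j * piv p True j + u0 * tau False j * piv p False j))"

definition sel :: "(bool \<Rightarrow> grp \<Rightarrow> real) \<Rightarrow> (grp \<Rightarrow> real) \<Rightarrow> bool \<Rightarrow> grp \<Rightarrow> real" where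
  "sel tau p v j = tau v j * piv p v j"

definition field :: "(real \<Rightarrow> real \<Rightarrow> real) \<Rightarrow> (real \<Rightarrow> real \<Rightarrow> real)
     \<Rightarrow> (bool \<Rightarrow> grp \<Rightarrow> real) \<Rightarrow> (grp \<Rightarrow> real) \<Rightarrow> grp \<Rightarrow> real" where
  "field f0 f1 tau p j =
     p j * (f1 (sel tau p False j) (sel tau p True j) - 1)
     + (1 - p j) * f0 (sel tau p False j) (sel tau p True j)"

(* the currently advantaged group (ties broken towards A; at a tie all the
   policies below induce the same selection rates for either choice) *)
definition adv :: "(grp \<Rightarrow> real) \<Rightarrow> grp" where
  "adv p = (if p GB \<le> p GA then GA else GB)"

definition UNpol :: "(grp \<Rightarrow> real) \<Rightarrow> bool \<Rightarrow> grp \<Rightarrow> real" where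
  "UNpol p v j = (if v then 1 else 0)"

definition AA1pol :: "(grp \<Rightarrow> real) \<Rightarrow> bool \<Rightarrow> grp \<Rightarrow> real" where
  "AA1pol p v j = (let a = adv p in
     if v then (if j = a then p (other a) / p a else 1) else 0)"

definition AA2pol :: "(grp \<Rightarrow> real) \<Rightarrow> bool \<Rightarrow> grp \<Rightarrow> real" where
  "AA2pol p v j = (let a = adv p in
     if v then 1
     else (if j = a then 0 else (p a - p (other a)) / (1 - p (other a))))"

definition trajectory :: "(real \<Rightarrow> real \<Rightarrow> real) \<Rightarrow> (real \<Rightarrow> real \<Rightarrow> real)
     \<Rightarrow> ((grp \<Rightarrow> real) \<Rightarrow> bool \<Rightarrow> grp \<Rightarrow> real) \<Rightarrow> (real \<Rightarrow> grp \<Rightarrow> real) \<Rightarrow> bool" where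
  "trajectory f0 f1 P x \<longleftrightarrow>
     (\<forall>t\<ge>0. \<forall>j. x t j \<in> {0..1}) \<and>
     (\<forall>t\<ge>0. \<forall>j. ((\<lambda>s. x s j) has_real_derivative field f0 f1 (P (x t)) (x t) j)
                   (at t within {0..}))"

definition C1_on2 :: "(real \<Rightarrow> real \<Rightarrow> real) \<Rightarrow> (real \<times> real) set \<Rightarrow> bool" where
  "C1_on2 h S \<longleftrightarrow> (\<exists>grad :: real \<times> real \<Rightarrow> real \<times> real.
      continuous_on S grad \<and>
      (\<forall>z\<in>S. ((\<lambda>w. h (fst w) (snd w)) has_derivative
                 (\<lambda>d. fst (grad z) * fst d + snd (grad z) * snd d)) (at z within S)))"

definition l1_lipschitz :: "(real \<Rightarrow> real \<Rightarrow> real) \<Rightarrow> real \<Rightarrow> bool" where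
  "l1_lipschitz h L \<longleftrightarrow> (\<forall>x1\<in>{0..1}. \<forall>x2\<in>{0..1}. \<forall>y1\<in>{0..1}. \<forall>y2\<in>{0..1}.
      \<bar>h x1 x2 - h y1 y2\<bar> \<le> L * (\<bar>x1 - y1\<bar> + \<bar>x2 - y2\<bar>))"

definition sol1 :: "(real \<Rightarrow> real) \<Rightarrow> (real \<Rightarrow> real) \<Rightarrow> bool" where
  "sol1 f y \<longleftrightarrow> (\<forall>t\<ge>0. y t \<in> {0..1}) \<and>
     (\<forall>t\<ge>0. (y has_real_derivative (f (y t) - y t)) (at t within {0..}))"

definition basin :: "nat \<Rightarrow> (nat \<Rightarrow> real) \<Rightarrow> nat \<Rightarrow> real set" where
  "basin k \<delta> i =
     (if k = 1 then {0..1}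
      else if i = 1 then {0..<\<delta> 1}
      else if i = k then {\<delta> (k - 1)<..1}
      else {\<delta> (i - 1)<..<\<delta> i})"

definition k_equilibrium :: "(real \<Rightarrow> real) \<Rightarrow> nat \<Rightarrow> (nat \<Rightarrow> real) \<Rightarrow> (nat \<Rightarrow> real) \<Rightarrow> bool" where
  "k_equilibrium f k e \<delta> \<longleftrightarrow>
     k \<ge> 1 \<and> f C1_differentiable_on {0..1} \<and>
     (\<forall>i\<in>{1..k}. e i \<in> {0..1} \<and> f (e i) = e i) \<and>
     (\<forall>i\<in>{1..<k}. e i \<le> e (Suc i)) \<and>
     (\<forall>i\<in>{1..<k}. e i < \<delta> i \<and> \<delta> i < e (Suc i) \<and> f (\<delta> i) = \<delta> i) \<and>
     (\<forall>i\<in>{1..k}. \<forall>y. sol1 f y \<and> y 0 \<in> basin k \<delta> i \<longrightarrow> (y \<longlongrightarrow> e i) at_top)"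

end

theory Submission
  imports Defs "HOL-Real_Asymp.Real_Asymp"
begin



lemma nonincr_within:
  fixes \<phi> \<phi>' :: "real \<Rightarrow> real"
  assumes d: "\<And>t. 0 \<le> t \<Longrightarrow> (\<phi> has_real_derivative \<phi>' t) (at t within {0..})"
    and n: "\<And>t. 0 \<le> t \<Longrightarrow> \<phi>' t \<le> 0" and s: "0 \<le> s" "s \<le> t"
  shows "\<phi> t \<le> \<phi> s"
proof -
  have c: "continuous_on {0..} \<phi>" by (rule DERIV_continuous_on) (use d in auto)
  show ?thesis
  proof (rule DERIV_nonpos_imp_decreasing_open[OF s(2)])
    fix x assume x: "s < x" "x < t"
    have "at x within {0..} = at x" using x s by (intro at_within_interior) auto
    then show "\<exists>y. DERIV \<phi> x :> y \<and> y \<le> 0" using d[of x] n[of x] x s by auto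
  next
    show "continuous_on {s..t} \<phi>" using c by (rule continuous_on_subset) (use s in auto)
  qed
qed

lemma decayA:
  fixes D D' :: "real \<Rightarrow> real"
  assumes d: "\<And>t. 0 \<le> t \<Longrightarrow> (D has_real_derivative D' t) (at t within {0..})"
    and b: "\<And>t. 0 \<le> t \<Longrightarrow> D t * D' t \<le> c * (D t)^2"
    and s: "0 \<le> s" "s \<le> t"
  shows "(D t)^2 \<le> (D s)^2 * exp (2*c*(t-s))"
proof -
  define \<phi> where "\<phi> = (\<lambda>t. (D t)^2 * exp (-(2*c*t)))"
  have "\<phi> t \<le> \<phi> s"
  proof (rule nonincr_within[OF _ _ s])
    fix t :: real assume t: "0 \<le> t"
    show "(\<phi> has_real_derivative (2 * D t * D' t * exp (-(2*c*t)) + (D t)^2 * (exp (-(2*c*t)) * (-(2*c))))) (at t within {0..})"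
      unfolding \<phi>_def
      by (rule derivative_eq_intros d[OF t] refl | simp)+
    have "2 * D t * D' t * exp (-(2*c*t)) + (D t)^2 * (exp (-(2*c*t)) * (-(2*c)))
        = 2 * exp (-(2*c*t)) * (D t * D' t - c * (D t)^2)" by (simp add: algebra_simps)
    also have "\<dots> \<le> 0" using b[OF t] by (intro mult_nonneg_nonpos) auto
    finally show "2 * D t * D' t * exp (-(2*c*t)) + (D t)^2 * (exp (-(2*c*t)) * (-(2*c))) \<le> 0" .
  qed
  then have "\<phi> t * exp (2*c*t) \<le> \<phi> s * exp (2*c*t)"
    by (intro mult_right_mono) auto
  moreover have "\<phi> t * exp (2*c*t) = (D t)^2"
    unfolding \<phi>_def by (simp add: mult.assoc exp_add[symmetric])
  moreover have "\<phi> s * exp (2*c*t) = (D s)^2 * exp (2*c*(t-s))"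
    unfolding \<phi>_def by (simp add: mult.assoc exp_add[symmetric] algebra_simps)
  ultimately show ?thesis by simp
qed

lemma decayB:
  fixes D D' :: "real \<Rightarrow> real"
  assumes d: "\<And>t. 0 \<le> t \<Longrightarrow> (D has_real_derivative D' t) (at t within {0..})"
    and b: "\<And>t. 0 \<le> t \<Longrightarrow> D t * D' t \<le> c * (D t)^2"
    and D0: "0 \<le> D 0" and t: "0 \<le> t"
  shows "0 \<le> D t"
proof (rule ccontr)
  assume "\<not> 0 \<le> D t"
  hence neg: "D t < 0" by simp
  have c: "continuous_on {0..} D" by (rule DERIV_continuous_on) (use d in auto)
  have "continuous_on {0..t} D" using c by (rule continuous_on_subset) auto
  then obtain s where s: "0 \<le> s" "s \<le> t" "D s = 0" using IVT2'[of D t 0 0] neg D0 t by auto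
  have "(D t)^2 \<le> (D s)^2 * exp (2*c*(t-s))" by (rule decayA[OF d b s(1,2)])
  with s(3) have "(D t)^2 \<le> 0" by simp
  with neg show False by (metis not_le zero_less_power2 neq_iff)
qed

lemma decayC:
  fixes D D' :: "real \<Rightarrow> real"
  assumes d: "\<And>t. 0 \<le> t \<Longrightarrow> (D has_real_derivative D' t) (at t within {0..})"
    and b: "\<And>t. 0 \<le> t \<Longrightarrow> D t * D' t \<le> c * (D t)^2"
    and c: "c < 0"
  shows "(D \<longlongrightarrow> 0) at_top"
proof -
  have lim: "((\<lambda>t. (D 0)^2 * exp (2*c*(t-0))) \<longlongrightarrow> 0) at_top"
    using c by real_asymp
  have "((\<lambda>t. (D t)^2) \<longlongrightarrow> 0) at_top"
  proof (rule tendsto_sandwich[OF _ _ tendsto_const lim])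
    show "\<forall>\<^sub>F t in at_top. 0 \<le> (D t)^2" by auto
    show "\<forall>\<^sub>F t in at_top. (D t)^2 \<le> (D 0)^2 * exp (2*c*(t-0))"
      using eventually_ge_at_top[of 0] by eventually_elim (rule decayA[OF d b], auto)
  qed
  then have "((\<lambda>t. sqrt ((D t)^2)) \<longlongrightarrow> sqrt 0) at_top" by (rule tendsto_real_sqrt)
  then have "((\<lambda>t. \<bar>D t\<bar>) \<longlongrightarrow> 0) at_top" by simp
  then show ?thesis by (simp add: tendsto_rabs_zero_iff)
qed




lemma field_UN: "field f0 f1 (UNpol p) p j = p j * f1 0 (p j) + (1 - p j) * f0 0 (p j) - p j"
  by (simp add: field_def sel_def UNpol_def piv_def algebra_simps)

lemma field_AA1:
  assumes "p GA \<in> {0..1}" "p GB \<in> {0..1}"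
  shows "field f0 f1 (AA1pol p) p j = p j * (f1 0 (min (p GA) (p GB)) - 1) + (1 - p j) * f0 0 (min (p GA) (p GB))"
proof -
  have s0: "sel (AA1pol p) p False j = 0" by (simp add: sel_def AA1pol_def Let_def)
  have s1: "sel (AA1pol p) p True j = min (p GA) (p GB)"
    using assms by (cases j) (auto simp: sel_def AA1pol_def Let_def adv_def piv_def min_def)
  show ?thesis by (simp add: field_def s0 s1)
qed

lemma field_AA2:
  assumes "p GA \<in> {0..1}" "p GB \<in> {0..1}"
  shows "field f0 f1 (AA2pol p) p j = p j * (f1 (max (p GA) (p GB) - p j) (p j) - 1)
           + (1 - p j) * f0 (max (p GA) (p GB) - p j) (p j)"
proof -
  have s0: "sel (AA2pol p) p False j = max (p GA) (p GB) - p j"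
    using assms by (cases j) (auto simp: sel_def AA2pol_def Let_def adv_def piv_def max_def)
  have s1: "sel (AA2pol p) p True j = p j" by (simp add: sel_def AA2pol_def Let_def piv_def)
  show ?thesis by (simp add: field_def s0 s1)
qed

lemma util_UN: "utility u0 u1 gA (UNpol p) p = u1 * (gA * p GA + (1 - gA) * p GB)"
  by (simp add: utility_def UNpol_def gfrac_def piv_def algebra_simps)

lemma util_AA1:
  assumes "p GA \<in> {0..1}" "p GB \<in> {0..1}" "p GB \<le> p GA"
  shows "utility u0 u1 gA (AA1pol p) p = u1 * p GB"
proof (cases "p GA = 0")
  case True
  then have "p GB = 0" using assms by auto
  then show ?thesis using True by (simp add: utility_def AA1pol_def gfrac_def piv_def adv_def Let_def)
next
  case False
  then show ?thesis using assms by (simp add: utility_def AA1pol_def gfrac_def piv_def adv_def Let_def algebra_simps)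
qed

lemma util_AA2:
  assumes "p GA \<in> {0..1}" "p GB \<in> {0..1}" "p GB \<le> p GA"
  shows "utility u0 u1 gA (AA2pol p) p = u1 * (gA * p GA + (1 - gA) * p GB) + (1 - gA) * u0 * (p GA - p GB)"
proof (cases "p GB = 1")
  case True
  then have "p GA = 1" using assms by auto
  then show ?thesis using True by (simp add: utility_def AA2pol_def gfrac_def piv_def adv_def Let_def algebra_simps)
next
  case False
  then have "1 - p GB \<noteq> 0" by simp
  then have q: "(p GA - p GB) / (1 - p GB) * (1 - p GB) = p GA - p GB" by simp
  have "utility u0 u1 gA (AA2pol p) p = gA * (u1 * p GA) + (1 - gA) * (u1 * p GB + u0 * ((p GA - p GB) / (1 - p GB) * (1 - p GB)))"
    using assms by (simp add: utility_def AA2pol_def gfrac_def piv_def adv_def Let_def)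
  then show ?thesis unfolding q by (simp add: algebra_simps)
qed

lemma aa2_ineq:
  fixes a b K L1 L0 :: real
  assumes ab: "a \<in> {0..1}" "b \<in> {0..1}" "b \<le> a"
    and l1: "l1_lipschitz f1 L1" and l0: "l1_lipschitz f0 L0"
    and K: "2*(a*L1+(1-a)*L0) + \<bar>f1 (a-b) b - f0 (a-b) b\<bar> \<le> K"
  shows "(a-b)*((a*(f1 0 a - 1) + (1-a)*f0 0 a) - (b*(f1 (a-b) b - 1) + (1-b)*f0 (a-b) b))
         \<le> (K-1)*(a-b)^2"
proof -
  define d where "d = a - b"
  have d0: "0 \<le> d" "d \<le> 1" using ab by (auto simp: d_def)
  have e1: "\<bar>f1 0 a - f1 d b\<bar> \<le> L1 * (d + d)"
  proof -
    have "\<bar>f1 0 a - f1 d b\<bar> \<le> L1 * (\<bar>0 - d\<bar> + \<bar>a - b\<bar>)"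
      using l1[unfolded l1_lipschitz_def, rule_format, of 0 a d b] ab d0 by auto
    moreover have "\<bar>a - b\<bar> = d" using d0 by (simp add: d_def)
    ultimately show ?thesis using d0 by simp
  qed
  have e0: "\<bar>f0 0 a - f0 d b\<bar> \<le> L0 * (d + d)"
  proof -
    have "\<bar>f0 0 a - f0 d b\<bar> \<le> L0 * (\<bar>0 - d\<bar> + \<bar>a - b\<bar>)"
      using l0[unfolded l1_lipschitz_def, rule_format, of 0 a d b] ab d0 by auto
    moreover have "\<bar>a - b\<bar> = d" using d0 by (simp add: d_def)
    ultimately show ?thesis using d0 by simp
  qed
  have eq: "(a*(f1 0 a - 1) + (1-a)*f0 0 a) - (b*(f1 d b - 1) + (1-b)*f0 d b)
     = -d + a*(f1 0 a - f1 d b) + (1-a)*(f0 0 a - f0 d b) + d*(f1 d b - f0 d b)"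
    by (simp add: d_def algebra_simps)
  have t1: "a*(f1 0 a - f1 d b) \<le> a*(2*L1*d)"
    using e1 ab by (intro mult_left_mono) (auto simp: abs_le_iff)
  have t0: "(1-a)*(f0 0 a - f0 d b) \<le> (1-a)*(2*L0*d)"
    using e0 ab by (intro mult_left_mono) (auto simp: abs_le_iff)
  have t2: "f1 d b - f0 d b \<le> \<bar>f1 d b - f0 d b\<bar>" by simp
  have "-d + a*(f1 0 a - f1 d b) + (1-a)*(f0 0 a - f0 d b) + d*(f1 d b - f0 d b)
        \<le> -d + a*(2*L1*d) + (1-a)*(2*L0*d) + d*\<bar>f1 d b - f0 d b\<bar>"
    using t1 t0 mult_left_mono[OF t2 d0(1)] by linarith
  also have "\<dots> = d * (2*(a*L1+(1-a)*L0) + \<bar>f1 d b - f0 d b\<bar> - 1)" by (simp add: algebra_simps)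
  also have "\<dots> \<le> d * (K - 1)" using K d0 by (intro mult_left_mono) (auto simp: d_def)
  finally have "(a*(f1 0 a - 1) + (1-a)*f0 0 a) - (b*(f1 d b - 1) + (1-b)*f0 d b) \<le> d*(K-1)"
    using eq by simp
  then have "d * ((a*(f1 0 a - 1) + (1-a)*f0 0 a) - (b*(f1 d b - 1) + (1-b)*f0 d b)) \<le> d*(d*(K-1))"
    using d0 by (intro mult_left_mono) auto
  then show ?thesis by (simp add: d_def power2_eq_square algebra_simps)
qed




lemma mono_e:
  assumes "\<forall>i\<in>{1..<k}. e i \<le> e (Suc i)" "1 \<le> a" "a \<le> b" "b \<le> k"
  shows "(e a :: real) \<le> e b"
  using assms(3,4)
proof (induction b rule: dec_induct)
  case base then show ?case by simp
next
  case (step n)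
  then have "e n \<le> e (Suc n)" using assms(1,2) by auto
  with step show ?case by simp
qed

lemma i_le_j:
  assumes e: "\<forall>i\<in>{1..<k}. e i \<le> e (Suc i)"
    and dl: "\<forall>i\<in>{1..<k}. e i < \<delta> i \<and> \<delta> i < e (Suc i)"
    and ij: "i \<in> {1..k}" "j \<in> {1..k}"
    and pB: "(pb::real) \<in> basin k \<delta> i" and pA: "pa \<in> basin k \<delta> j" and le: "pb \<le> pa"
  shows "i \<le> j"
proof (rule ccontr)
  assume "\<not> i \<le> j"
  hence ji: "j < i" by simp
  hence k1: "k \<noteq> 1" "j < k" "2 \<le> i" using ij by auto
  have "pa < \<delta> j" using pA k1 ij unfolding basin_def by (auto split: if_splits)
  moreover have "\<delta> (i - 1) < pb" using pB k1 ij unfolding basin_def by (auto split: if_splits)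
  moreover have "\<delta> j \<le> \<delta> (i - 1)"
  proof (cases "j = i - 1")
    case False
    then have "j < i - 1" using ji by auto
    have "\<delta> j < e (Suc j)" using dl ij k1 by auto
    also have "e (Suc j) \<le> e (i - 1)" using mono_e[OF e, of "Suc j" "i - 1"] \<open>j < i - 1\<close> ij by auto
    also have "e (i - 1) < \<delta> (i - 1)"
    proof -
      have "i - 1 \<in> {1..<k}" using ij k1 by auto
      then show ?thesis using dl by blast
    qed
    finally show ?thesis by simp
  qed simp
  ultimately show False using le by simp
qed

lemma bdd1:
  fixes f0 f1 :: "real \<Rightarrow> real \<Rightarrow> real"
  assumes f0r: "\<forall>x\<in>{0..1}. \<forall>y\<in>{0..1}. f0 x y \<in> {0..1::real}"
    and f1r: "\<forall>x\<in>{0..1}. \<forall>y\<in>{0..1}. f1 x y \<in> {0..1::real}"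
  shows "bdd_above ((\<lambda>\<pi>. \<bar>f1 0 \<pi> - f0 0 \<pi>\<bar>) ` {0..1})"
proof (rule bdd_aboveI2)
  fix \<pi> :: real assume "\<pi> \<in> {0..1}"
  then have "f0 0 \<pi> \<in> {0..1}" "f1 0 \<pi> \<in> {0..1}" using f0r f1r by auto
  then show "\<bar>f1 0 \<pi> - f0 0 \<pi>\<bar> \<le> 1" by auto
qed

lemma bdd2:
  fixes f0 f1 :: "real \<Rightarrow> real \<Rightarrow> real"
  assumes f0r: "\<forall>x\<in>{0..1}. \<forall>y\<in>{0..1}. f0 x y \<in> {0..1::real}"
    and f1r: "\<forall>x\<in>{0..1}. \<forall>y\<in>{0..1}. f1 x y \<in> {0..1::real}"
  shows "bdd_above ((\<lambda>(d, \<pi>). 2 * (\<pi> * L1 + (1 - \<pi>) * L0) + \<bar>f1 d (\<pi> - d) - f0 d (\<pi> - d)\<bar>)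
           ` {(d, \<pi>). 0 \<le> d \<and> d \<le> \<pi> \<and> \<pi> \<le> (1::real)})"
proof (rule bdd_aboveI2)
  fix z :: "real \<times> real" assume "z \<in> {(d, \<pi>). 0 \<le> d \<and> d \<le> \<pi> \<and> \<pi> \<le> (1::real)}"
  then obtain d \<pi> where z: "z = (d, \<pi>)" "0 \<le> d" "d \<le> \<pi>" "\<pi> \<le> 1" by auto
  then have "f0 d (\<pi> - d) \<in> {0..1}" "f1 d (\<pi> - d) \<in> {0..1}" using f0r f1r by auto
  then have a: "\<bar>f1 d (\<pi> - d) - f0 d (\<pi> - d)\<bar> \<le> 1" by auto
  have b1: "\<pi> * L1 \<le> \<bar>L1\<bar>"
  proof -
    have "\<pi> * L1 \<le> \<pi> * \<bar>L1\<bar>" using z by (intro mult_left_mono) auto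
    also have "\<dots> \<le> 1 * \<bar>L1\<bar>" using z by (intro mult_right_mono) auto
    finally show ?thesis by simp
  qed
  have b0: "(1 - \<pi>) * L0 \<le> \<bar>L0\<bar>"
  proof -
    have "(1 - \<pi>) * L0 \<le> (1 - \<pi>) * \<bar>L0\<bar>" using z by (intro mult_left_mono) auto
    also have "\<dots> \<le> 1 * \<bar>L0\<bar>" using z by (intro mult_right_mono) auto
    finally show ?thesis by simp
  qed
  show "(\<lambda>(d, \<pi>). 2 * (\<pi> * L1 + (1 - \<pi>) * L0) + \<bar>f1 d (\<pi> - d) - f0 d (\<pi> - d)\<bar>) z
        \<le> 2 * (\<bar>L1\<bar> + \<bar>L0\<bar>) + 1"
    using a b1 b0 z(1) by simp
qed




theorem mainTheorem12:
  fixes f0 f1 :: "real \<Rightarrow> real \<Rightarrow> real"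
    and u0 u1 gA :: real
    and k i j :: nat
    and e \<delta> :: "nat \<Rightarrow> real"
    and p0 :: "grp \<Rightarrow> real"
  assumes f0_C1: "C1_on2 f0 ({0..1} \<times> {0..1})"
    and f1_C1: "C1_on2 f1 ({0..1} \<times> {0..1})"
    and f0_range: "\<forall>x\<in>{0..1}. \<forall>y\<in>{0..1}. f0 x y \<in> {0..1}"
    and f1_range: "\<forall>x\<in>{0..1}. \<forall>y\<in>{0..1}. f1 x y \<in> {0..1}"
    and u: "u0 \<le> 0" "0 \<le> u1"
    and gA: "gA \<in> {0..1}"
    and keq: "k_equilibrium (\<lambda>\<pi>. \<pi> * f1 0 \<pi> + (1 - \<pi>) * f0 0 \<pi>) k e \<delta>"
    and ij: "i \<in> {1..k}" "j \<in> {1..k}"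
    and p0B: "p0 GB \<in> basin k \<delta> i"
    and p0A: "p0 GA \<in> basin k \<delta> j"
    and Aadv: "p0 GB \<le> p0 GA"
  shows
    "(\<forall>x. trajectory f0 f1 UNpol x \<and> x 0 = p0 \<longrightarrow>
         ((\<lambda>t. x t GA) \<longlongrightarrow> e j) at_top \<and>
         ((\<lambda>t. x t GB) \<longlongrightarrow> e i) at_top \<and>
         ((\<lambda>t. utility u0 u1 gA (UNpol (x t)) (x t))
            \<longlongrightarrow> u1 * (gA * e j + (1 - gA) * e i)) at_top)
     \<and>
     ((SUP \<pi>\<in>{0..1}. \<bar>f1 0 \<pi> - f0 0 \<pi>\<bar>) < 1 \<longrightarrow>
       (\<forall>x. trajectory f0 f1 AA1pol x \<and> x 0 = p0 \<longrightarrow>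
         ((\<lambda>t. x t GA) \<longlongrightarrow> e i) at_top \<and>
         ((\<lambda>t. x t GB) \<longlongrightarrow> e i) at_top \<and>
         ((\<lambda>t. utility u0 u1 gA (AA1pol (x t)) (x t)) \<longlongrightarrow> u1 * e i) at_top) \<and>
       u1 * e i \<le> u1 * (gA * e j + (1 - gA) * e i))
     \<and>
     (\<forall>L1 L0. l1_lipschitz f1 L1 \<and> l1_lipschitz f0 L0 \<and>
        (SUP (d, \<pi>)\<in>{(d, \<pi>). 0 \<le> d \<and> d \<le> \<pi> \<and> \<pi> \<le> 1}.
            2 * (\<pi> * L1 + (1 - \<pi>) * L0) + \<bar>f1 d (\<pi> - d) - f0 d (\<pi> - d)\<bar>) < 1 \<longrightarrow>
       (\<forall>x. trajectory f0 f1 AA2pol x \<and> x 0 = p0 \<longrightarrow>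
         ((\<lambda>t. x t GA) \<longlongrightarrow> e j) at_top \<and>
         ((\<lambda>t. x t GB) \<longlongrightarrow> e j) at_top \<and>
         ((\<lambda>t. utility u0 u1 gA (AA2pol (x t)) (x t)) \<longlongrightarrow> u1 * e j) at_top) \<and>
       u1 * (gA * e j + (1 - gA) * e i) \<le> u1 * e j)"
proof -
  define f where "f = (\<lambda>\<pi>::real. \<pi> * f1 0 \<pi> + (1 - \<pi>) * f0 0 \<pi>)"
  have emono: "\<forall>i\<in>{1..<k}. e i \<le> e (Suc i)"
    and dl: "\<forall>i\<in>{1..<k}. e i < \<delta> i \<and> \<delta> i < e (Suc i) \<and> f (\<delta> i) = \<delta> i"
    and conv: "\<forall>i\<in>{1..k}. \<forall>y. sol1 f y \<and> y 0 \<in> basin k \<delta> i \<longrightarrow> (y \<longlongrightarrow> e i) at_top"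
    using keq unfolding k_equilibrium_def f_def by auto
  have "i \<le> j" by (rule i_le_j[OF emono _ ij p0B p0A Aadv]) (use dl in auto)
  then have eij: "e i \<le> e j" using mono_e[OF emono, of i j] ij by auto
  have cmp1: "u1 * e i \<le> u1 * (gA * e j + (1 - gA) * e i)"
  proof -
    have "e i \<le> gA * e j + (1 - gA) * e i"
      using eij gA mult_left_mono[OF eij, of gA] by (simp add: algebra_simps)
    then show ?thesis using u by (intro mult_left_mono) auto
  qed
  have cmp2: "u1 * (gA * e j + (1 - gA) * e i) \<le> u1 * e j"
  proof -
    have "gA * e j + (1 - gA) * e i \<le> e j"
      using eij gA mult_left_mono[OF eij, of "1 - gA"] by (simp add: algebra_simps)
    then show ?thesis using u by (intro mult_left_mono) auto
  qed
  have solconv: "((\<lambda>t. x t g) \<longlongrightarrow> e l) at_top"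
    if tr: "\<forall>t\<ge>0. \<forall>j. x t j \<in> {0..1}"
      and dv: "\<And>t. 0 \<le> t \<Longrightarrow> ((\<lambda>s. x s g) has_real_derivative (f (x t g) - x t g)) (at t within {0..})"
      and l: "l \<in> {1..k}" and b: "x 0 g \<in> basin k \<delta> l"
    for x :: "real \<Rightarrow> grp \<Rightarrow> real" and g l
  proof -
    have "sol1 f (\<lambda>t. x t g)" unfolding sol1_def using tr dv by auto
    then show ?thesis using conv l b by auto
  qed
  have UN: "(\<forall>x. trajectory f0 f1 UNpol x \<and> x 0 = p0 \<longrightarrow>
         ((\<lambda>t. x t GA) \<longlongrightarrow> e j) at_top \<and>
         ((\<lambda>t. x t GB) \<longlongrightarrow> e i) at_top \<and>
         ((\<lambda>t. utility u0 u1 gA (UNpol (x t)) (x t))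
            \<longlongrightarrow> u1 * (gA * e j + (1 - gA) * e i)) at_top)"
  proof (intro allI impI)
    fix x assume a: "trajectory f0 f1 UNpol x \<and> x 0 = p0"
    then have tr: "\<forall>t\<ge>0. \<forall>j. x t j \<in> {0..1}"
      and dv: "\<And>t g. 0 \<le> t \<Longrightarrow> ((\<lambda>s. x s g) has_real_derivative field f0 f1 (UNpol (x t)) (x t) g) (at t within {0..})"
      unfolding trajectory_def by auto
    have dv': "((\<lambda>s. x s g) has_real_derivative (f (x t g) - x t g)) (at t within {0..})" if "0 \<le> t" for t g
      using dv[OF that, of g] by (simp add: field_UN f_def)
    have cA: "((\<lambda>t. x t GA) \<longlongrightarrow> e j) at_top" using solconv[OF tr dv' ij(2)] p0A a by auto
    have cB: "((\<lambda>t. x t GB) \<longlongrightarrow> e i) at_top" using solconv[OF tr dv' ij(1)] p0B a by auto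
    have "((\<lambda>t. u1 * (gA * x t GA + (1 - gA) * x t GB)) \<longlongrightarrow> u1 * (gA * e j + (1 - gA) * e i)) at_top"
      by (intro tendsto_intros cA cB)
    then show "((\<lambda>t. x t GA) \<longlongrightarrow> e j) at_top \<and> ((\<lambda>t. x t GB) \<longlongrightarrow> e i) at_top \<and>
         ((\<lambda>t. utility u0 u1 gA (UNpol (x t)) (x t)) \<longlongrightarrow> u1 * (gA * e j + (1 - gA) * e i)) at_top"
      using cA cB by (simp add: util_UN)
  qed
  have AA1: "(SUP \<pi>\<in>{0..1}. \<bar>f1 0 \<pi> - f0 0 \<pi>\<bar>) < 1 \<longrightarrow> (\<forall>x. trajectory f0 f1 AA1pol x \<and> x 0 = p0 \<longrightarrow>
         ((\<lambda>t. x t GA) \<longlongrightarrow> e i) at_top \<and>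
         ((\<lambda>t. x t GB) \<longlongrightarrow> e i) at_top \<and>
         ((\<lambda>t. utility u0 u1 gA (AA1pol (x t)) (x t)) \<longlongrightarrow> u1 * e i) at_top)"
  proof (intro impI allI)
    fix x
    assume K: "(SUP \<pi>\<in>{0..1}. \<bar>f1 0 \<pi> - f0 0 \<pi>\<bar>) < 1"
    define Kc where "Kc = (SUP \<pi>\<in>{0..1}. \<bar>f1 0 \<pi> - f0 0 \<pi>\<bar>)"
    have Kle: "\<bar>f1 0 \<pi> - f0 0 \<pi>\<bar> \<le> Kc" if "\<pi> \<in> {0..1}" for \<pi>
      unfolding Kc_def by (rule cSUP_upper[OF that bdd1[OF f0_range f1_range]])
    assume a: "trajectory f0 f1 AA1pol x \<and> x 0 = p0"
    then have tr: "\<forall>t\<ge>0. \<forall>j. x t j \<in> {0..1}"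
      and dv: "\<And>t g. 0 \<le> t \<Longrightarrow> ((\<lambda>s. x s g) has_real_derivative field f0 f1 (AA1pol (x t)) (x t) g) (at t within {0..})"
      unfolding trajectory_def by auto
    define D where "D = (\<lambda>t. x t GA - x t GB)"
    define D' where "D' = (\<lambda>t. field f0 f1 (AA1pol (x t)) (x t) GA - field f0 f1 (AA1pol (x t)) (x t) GB)"
    have dD: "(D has_real_derivative D' t) (at t within {0..})" if "0 \<le> t" for t
      unfolding D_def D'_def by (intro DERIV_diff dv that)
    have bD: "D t * D' t \<le> (Kc - 1) * (D t)^2" if "0 \<le> t" for t
    proof -
      define m where "m = min (x t GA) (x t GB)"
      have m: "m \<in> {0..1}" using tr that by (auto simp: m_def min_def)
      have "D' t = D t * (f1 0 m - f0 0 m - 1)"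
        unfolding D'_def D_def m_def using tr that by (simp add: field_AA1 algebra_simps)
      then have "D t * D' t = (f1 0 m - f0 0 m - 1) * (D t)^2" by (simp add: power2_eq_square)
      also have "\<dots> \<le> (Kc - 1) * (D t)^2"
        using Kle[OF m] by (intro mult_right_mono) auto
      finally show ?thesis .
    qed
    have D0: "0 \<le> D 0" using a Aadv by (simp add: D_def)
    have le: "x t GB \<le> x t GA" if "0 \<le> t" for t using decayB[OF dD bD D0 that] by (simp add: D_def)
    have Dlim: "(D \<longlongrightarrow> 0) at_top" by (rule decayC[OF dD bD]) (use K Kc_def in auto)
    have dvB: "((\<lambda>s. x s GB) has_real_derivative (f (x t GB) - x t GB)) (at t within {0..})" if "0 \<le> t" for t
    proof -
      have mm: "min (x t GA) (x t GB) = x t GB" using le[OF that] by simp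
      show ?thesis using dv[OF that, of GB] tr that by (simp add: field_AA1 f_def mm algebra_simps)
    qed
    have cB: "((\<lambda>t. x t GB) \<longlongrightarrow> e i) at_top" using solconv[OF tr dvB ij(1)] p0B a by auto
    have "((\<lambda>t. x t GB + D t) \<longlongrightarrow> e i + 0) at_top" by (intro tendsto_intros cB Dlim)
    then have cA: "((\<lambda>t. x t GA) \<longlongrightarrow> e i) at_top" by (simp add: D_def)
    have "((\<lambda>t. u1 * x t GB) \<longlongrightarrow> u1 * e i) at_top" by (intro tendsto_intros cB)
    moreover have "\<forall>\<^sub>F t in at_top. u1 * x t GB = utility u0 u1 gA (AA1pol (x t)) (x t)"
      using eventually_ge_at_top[of 0]
      by eventually_elim (use tr le in \<open>simp add: util_AA1\<close>)
    ultimately have "((\<lambda>t. utility u0 u1 gA (AA1pol (x t)) (x t)) \<longlongrightarrow> u1 * e i) at_top"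
      by (rule tendsto_cong[THEN iffD1, rotated])
    then show "((\<lambda>t. x t GA) \<longlongrightarrow> e i) at_top \<and> ((\<lambda>t. x t GB) \<longlongrightarrow> e i) at_top \<and>
         ((\<lambda>t. utility u0 u1 gA (AA1pol (x t)) (x t)) \<longlongrightarrow> u1 * e i) at_top"
      using cA cB by simp
  qed
  have AA2: "\<forall>L1 L0. l1_lipschitz f1 L1 \<and> l1_lipschitz f0 L0 \<and>
        (SUP (d, \<pi>)\<in>{(d, \<pi>). 0 \<le> d \<and> d \<le> \<pi> \<and> \<pi> \<le> 1}.
            2 * (\<pi> * L1 + (1 - \<pi>) * L0) + \<bar>f1 d (\<pi> - d) - f0 d (\<pi> - d)\<bar>) < 1 \<longrightarrow> (\<forall>x. trajectory f0 f1 AA2pol x \<and> x 0 = p0 \<longrightarrow>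
         ((\<lambda>t. x t GA) \<longlongrightarrow> e j) at_top \<and>
         ((\<lambda>t. x t GB) \<longlongrightarrow> e j) at_top \<and>
         ((\<lambda>t. utility u0 u1 gA (AA2pol (x t)) (x t)) \<longlongrightarrow> u1 * e j) at_top)"
  proof (intro allI impI)
    fix L1 L0 x
    assume H: "l1_lipschitz f1 L1 \<and> l1_lipschitz f0 L0 \<and>
        (SUP (d, \<pi>)\<in>{(d, \<pi>). 0 \<le> d \<and> d \<le> \<pi> \<and> \<pi> \<le> 1}.
            2 * (\<pi> * L1 + (1 - \<pi>) * L0) + \<bar>f1 d (\<pi> - d) - f0 d (\<pi> - d)\<bar>) < 1"
    define Kc where "Kc = (SUP (d, \<pi>)\<in>{(d, \<pi>). 0 \<le> d \<and> d \<le> \<pi> \<and> \<pi> \<le> (1::real)}.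
            2 * (\<pi> * L1 + (1 - \<pi>) * L0) + \<bar>f1 d (\<pi> - d) - f0 d (\<pi> - d)\<bar>)"
    have l1: "l1_lipschitz f1 L1" and l0: "l1_lipschitz f0 L0" and K: "Kc < 1" using H by (auto simp: Kc_def)
    have Kle: "2*(a*L1+(1-a)*L0) + \<bar>f1 (a-b) b - f0 (a-b) b\<bar> \<le> Kc"
      if ab: "a \<in> {0..1}" "b \<in> {0..1}" "b \<le> a" for a b
    proof -
      have mem: "(a - b, a) \<in> {(d, \<pi>). 0 \<le> d \<and> d \<le> \<pi> \<and> \<pi> \<le> (1::real)}" using ab by auto
      have "(\<lambda>(d, \<pi>). 2 * (\<pi> * L1 + (1 - \<pi>) * L0) + \<bar>f1 d (\<pi> - d) - f0 d (\<pi> - d)\<bar>) (a - b, a) \<le> Kc"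
        unfolding Kc_def by (rule cSUP_upper[OF mem bdd2[OF f0_range f1_range]])
      then show ?thesis by simp
    qed
    have ineq: "(a-b)*((a*(f1 0 a - 1) + (1-a)*f0 0 a) - (b*(f1 (a-b) b - 1) + (1-b)*f0 (a-b) b))
         \<le> (Kc-1)*(a-b)^2"
      if ab: "a \<in> {0..1}" "b \<in> {0..1}" "b \<le> a" for a b
      by (rule aa2_ineq[OF ab l1 l0 Kle[OF ab]])
    assume a: "trajectory f0 f1 AA2pol x \<and> x 0 = p0"
    then have tr: "\<forall>t\<ge>0. \<forall>j. x t j \<in> {0..1}"
      and dv: "\<And>t g. 0 \<le> t \<Longrightarrow> ((\<lambda>s. x s g) has_real_derivative field f0 f1 (AA2pol (x t)) (x t) g) (at t within {0..})"
      unfolding trajectory_def by auto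
    define D where "D = (\<lambda>t. x t GA - x t GB)"
    define D' where "D' = (\<lambda>t. field f0 f1 (AA2pol (x t)) (x t) GA - field f0 f1 (AA2pol (x t)) (x t) GB)"
    have dD: "(D has_real_derivative D' t) (at t within {0..})" if "0 \<le> t" for t
      unfolding D_def D'_def by (intro DERIV_diff dv that)
    have bD: "D t * D' t \<le> (Kc - 1) * (D t)^2" if t0: "0 \<le> t" for t
    proof (cases "x t GB \<le> x t GA")
      case True
      have "D t * D' t = (x t GA - x t GB) * ((x t GA * (f1 0 (x t GA) - 1) + (1 - x t GA) * f0 0 (x t GA))
         - (x t GB * (f1 (x t GA - x t GB) (x t GB) - 1) + (1 - x t GB) * f0 (x t GA - x t GB) (x t GB)))"
        unfolding D'_def D_def using tr t0 True by (simp add: field_AA2 max_def)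
      also have "\<dots> \<le> (Kc - 1) * (x t GA - x t GB)^2" by (rule ineq) (use tr t0 True in auto)
      finally show ?thesis by (simp add: D_def)
    next
      case False
      have "D t * D' t = (x t GB - x t GA) * ((x t GB * (f1 0 (x t GB) - 1) + (1 - x t GB) * f0 0 (x t GB))
         - (x t GA * (f1 (x t GB - x t GA) (x t GA) - 1) + (1 - x t GA) * f0 (x t GB - x t GA) (x t GA)))"
        unfolding D'_def D_def using tr t0 False by (simp add: field_AA2 max_def algebra_simps)
      also have "\<dots> \<le> (Kc - 1) * (x t GB - x t GA)^2" by (rule ineq) (use tr t0 False in auto)
      finally show ?thesis by (simp add: D_def power2_commute)
    qed
    have D0: "0 \<le> D 0" using a Aadv by (simp add: D_def)
    have le: "x t GB \<le> x t GA" if "0 \<le> t" for t using decayB[OF dD bD D0 that] by (simp add: D_def)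
    have Dlim: "(D \<longlongrightarrow> 0) at_top" by (rule decayC[OF dD bD]) (use K in auto)
    have dvA: "((\<lambda>s. x s GA) has_real_derivative (f (x t GA) - x t GA)) (at t within {0..})" if "0 \<le> t" for t
    proof -
      have mm: "max (x t GA) (x t GB) = x t GA" using le[OF that] by simp
      show ?thesis using dv[OF that, of GA] tr that by (simp add: field_AA2 f_def mm algebra_simps)
    qed
    have cA: "((\<lambda>t. x t GA) \<longlongrightarrow> e j) at_top" using solconv[OF tr dvA ij(2)] p0A a by auto
    have "((\<lambda>t. x t GA - D t) \<longlongrightarrow> e j - 0) at_top" by (intro tendsto_intros cA Dlim)
    then have cB: "((\<lambda>t. x t GB) \<longlongrightarrow> e j) at_top" by (simp add: D_def)
    have "((\<lambda>t. u1 * (gA * x t GA + (1 - gA) * x t GB) + (1 - gA) * u0 * D t)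
            \<longlongrightarrow> u1 * (gA * e j + (1 - gA) * e j) + (1 - gA) * u0 * 0) at_top"
      by (intro tendsto_intros cA cB Dlim)
    then have "((\<lambda>t. u1 * (gA * x t GA + (1 - gA) * x t GB) + (1 - gA) * u0 * D t) \<longlongrightarrow> u1 * e j) at_top"
      by (simp add: algebra_simps)
    moreover have "\<forall>\<^sub>F t in at_top. u1 * (gA * x t GA + (1 - gA) * x t GB) + (1 - gA) * u0 * D t
                     = utility u0 u1 gA (AA2pol (x t)) (x t)"
      using eventually_ge_at_top[of 0]
      by eventually_elim (use tr le in \<open>simp add: util_AA2 D_def\<close>)
    ultimately have "((\<lambda>t. utility u0 u1 gA (AA2pol (x t)) (x t)) \<longlongrightarrow> u1 * e j) at_top"
      by (rule tendsto_cong[THEN iffD1, rotated])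
    then show "((\<lambda>t. x t GA) \<longlongrightarrow> e j) at_top \<and> ((\<lambda>t. x t GB) \<longlongrightarrow> e j) at_top \<and>
         ((\<lambda>t. utility u0 u1 gA (AA2pol (x t)) (x t)) \<longlongrightarrow> u1 * e j) at_top"
      using cA cB by simp
  qed
  show ?thesis using UN AA1 AA2 cmp1 cmp2 by blast
qed


end
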